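(* Let $(\Omega,+)$ be a group and $x,a,y,b,z\subseteq\Omega$ arbitrary subsets. Then: (1) $\Gamma(b,z,y,x,a)=-\Gamma(x,a,y,b,z)$, $\Gamma(z,b,y,a,x)=\check\Gamma(x,a,y,b,z)$ and $\Gamma(a,x,y,z,b)=-\check\Gamma(x,a,y,b,z)$; and if $x,a,y,b,z$ are all symmetric subsets, then $\Gamma(x,a,y,b,z)=\Gamma(a,x,y,z,b)$. (2) For each $\sigma$ in the Klein group $\{\mathrm{id},(\xi\omega)(\zeta\eta),(\xi\eta)(\zeta\omega),(\xi\zeta)(\eta\omega)\}$ of permutations of the six letters, one has $\sigma.\mathbf\Gamma=\mathbf\Gamma^{s}$ for a sign vector $s$ whose entries in the $\xi,\zeta,\eta,\omega$ positions are all $+1$; i.e. if signed versions differing only by sign changes in $\alpha$ or $\beta$ are regarded as equivalent, the equivalence class of $\mathbf\Gamma$ is invariant under this Klein group.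
   Context: $(\Omega,+)$ is a group written additively but not necessarily abelian. $\Gamma(x,a,y,b,z)=\{\omega:\exists\alpha\in a,\beta\in b:\ \alpha+\omega+\beta\in y,\ \alpha+\omega\in z,\ \omega+\beta\in x\}$, $\check\Gamma(x,a,y,b,z)=\{\omega:\exists\alpha\in a,\beta\in b:\ \beta+\omega+\alpha\in y,\ \omega+\alpha\in z,\ \beta+\omega\in x\}$; for a subset $u$, $-u=\{-\mu:\mu\in u\}$, and $u$ is symmetric if $-u=u$. The structure space is $\mathbf\Gamma=\{(\xi,\zeta,\alpha,\beta,\eta,\omega)\in\Omega^6:\ \eta=\alpha+\omega+\beta,\ \zeta=\alpha+\omega,\ \xi=\omega+\beta\}$. For a sign vector $s=(s_1,\dots,s_6)\in\{\pm1\}^6$, $\mathbf\Gamma^s=\{(\xi,\zeta,\alpha,\beta,\eta,\omega): (s_1\xi,s_2\zeta,s_3\alpha,s_4\beta,s_5\eta,s_6\omega)\in\mathbf\Gamma\}$. For a permutation $\sigma$ of the letters $\{\xi,\zeta,\alpha,\beta,\eta,\omega\}$, $\sigma.\mathbf\Gamma$ is the set of $(\xi,\zeta,\alpha,\beta,\eta,\omega)\in\Omega^6$ satisfying the equations obtained by renaming each letter $v$ to $\sigma(v)$, namely $\sigma(\eta)=\sigma(\alpha)+\sigma(\omega)+\sigma(\beta)$, $\sigma(\zeta)=\sigma(\alpha)+\sigma(\omega)$, $\sigma(\xi)=\sigma(\omega)+\sigma(\beta)$. *)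

theory Defs
  imports Main
begin

definition Gam :: "'a::group_add set \<Rightarrow> 'a set \<Rightarrow> 'a set \<Rightarrow> 'a set \<Rightarrow> 'a set \<Rightarrow> 'a set" where
  "Gam x a y b z = {\<omega>. \<exists>\<alpha>\<in>a. \<exists>\<beta>\<in>b. \<alpha> + \<omega> + \<beta> \<in> y \<and> \<alpha> + \<omega> \<in> z \<and> \<omega> + \<beta> \<in> x}"

definition Gam_check :: "'a::group_add set \<Rightarrow> 'a set \<Rightarrow> 'a set \<Rightarrow> 'a set \<Rightarrow> 'a set \<Rightarrow> 'a set" where
  "Gam_check x a y b z = {\<omega>. \<exists>\<alpha>\<in>a. \<exists>\<beta>\<in>b. \<beta> + \<omega> + \<alpha> \<in> y \<and> \<omega> + \<alpha> \<in> z \<and> \<beta> + \<omega> \<in> x}"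

text \<open>Negation of a subset: -u = {-mu. mu in u}, written explicitly as an image
  (on sets, plain uminus would be the complement).\<close>

definition neg_set :: "'a::group_add set \<Rightarrow> 'a set" where
  "neg_set u = uminus ` u"

definition symmetric_set :: "'a::group_add set \<Rightarrow> bool" where
  "symmetric_set u \<longleftrightarrow> neg_set u = u"

text \<open>The six letters; 6-tuples in Omega^6 are represented as functions letter => Omega.\<close>

datatype letter = Xi | Zeta | Alpha | Beta | Eta | Omega

definition GammaS :: "(letter \<Rightarrow> 'a::group_add) set" where
  "GammaS = {p. p Eta = p Alpha + p Omega + p Beta \<and> p Zeta = p Alpha + p Omega
                \<and> p Xi = p Omega + p Beta}"

definition sign_vec :: "(letter \<Rightarrow> int) \<Rightarrow> bool" where
  "sign_vec s \<longleftrightarrow> (\<forall>v. s v = 1 \<or> s v = -1)"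

definition apply_sign :: "(letter \<Rightarrow> int) \<Rightarrow> (letter \<Rightarrow> 'a::group_add) \<Rightarrow> letter \<Rightarrow> 'a" where
  "apply_sign s p v = (if s v = 1 then p v else - p v)"

definition GammaS_signed :: "(letter \<Rightarrow> int) \<Rightarrow> (letter \<Rightarrow> 'a::group_add) set" where
  "GammaS_signed s = {p. apply_sign s p \<in> GammaS}"

text \<open>sigma.Gamma: the tuples satisfying the defining equations with each letter v renamed to sigma v.\<close>

definition GammaS_perm :: "(letter \<Rightarrow> letter) \<Rightarrow> (letter \<Rightarrow> 'a::group_add) set" where
  "GammaS_perm \<sigma> = {p. p \<circ> \<sigma> \<in> GammaS}"

definition sw2 :: "letter \<Rightarrow> letter \<Rightarrow> letter \<Rightarrow> letter \<Rightarrow> letter \<Rightarrow> letter" where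
  "sw2 u v w t l = (if l = u then v else if l = v then u
                    else if l = w then t else if l = t then w else l)"

definition klein :: "(letter \<Rightarrow> letter) set" where
  "klein = {id, sw2 Xi Omega Zeta Eta, sw2 Xi Eta Zeta Omega, sw2 Xi Zeta Eta Omega}"

end

theory Submission
  imports Defs
begin

lemma mem_neg: "(w::'a::group_add) \<in> neg_set S \<longleftrightarrow> - w \<in> S"
  unfolding neg_set_def by (metis image_iff minus_minus)

lemma p1: "Gam b z y x a = neg_set (Gam x a y b z)"
proof (rule set_eqI, unfold mem_neg Gam_def mem_Collect_eq, rule iffI)
  fix w :: 'a
  assume "\<exists>\<alpha>\<in>z. \<exists>\<beta>\<in>x. \<alpha> + w + \<beta> \<in> y \<and> \<alpha> + w \<in> a \<and> w + \<beta> \<in> b"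
  then obtain \<alpha> \<beta> where h: "\<alpha>\<in>z" "\<beta>\<in>x" "\<alpha> + w + \<beta> \<in> y" "\<alpha> + w \<in> a" "w + \<beta> \<in> b" by blast
  show "\<exists>\<alpha>\<in>a. \<exists>\<beta>\<in>b. \<alpha> + - w + \<beta> \<in> y \<and> \<alpha> + - w \<in> z \<and> - w + \<beta> \<in> x"
    by (rule bexI[of _ "\<alpha> + w"], rule bexI[of _ "w + \<beta>"]) (use h in \<open>simp_all add: add.assoc flip: add_uminus_conv_diff\<close>)
next
  fix w :: 'a
  assume "\<exists>\<alpha>\<in>a. \<exists>\<beta>\<in>b. \<alpha> + - w + \<beta> \<in> y \<and> \<alpha> + - w \<in> z \<and> - w + \<beta> \<in> x"
  then obtain \<alpha> \<beta> where h: "\<alpha>\<in>a" "\<beta>\<in>b" "\<alpha> + - w + \<beta> \<in> y" "\<alpha> + - w \<in> z" "- w + \<beta> \<in> x" by blast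
  show "\<exists>\<alpha>\<in>z. \<exists>\<beta>\<in>x. \<alpha> + w + \<beta> \<in> y \<and> \<alpha> + w \<in> a \<and> w + \<beta> \<in> b"
    by (rule bexI[of _ "\<alpha> + - w"], rule bexI[of _ "- w + \<beta>"]) (use h in \<open>simp_all add: add.assoc flip: add_uminus_conv_diff\<close>)
qed

lemma p2: "Gam z b y a x = Gam_check x a y b z"
  unfolding Gam_def Gam_check_def by blast

lemma p3: "Gam a x y z b = neg_set (Gam_check x a y b z)"
proof (rule set_eqI, unfold mem_neg Gam_def Gam_check_def mem_Collect_eq, rule iffI)
  fix w :: 'a
  assume "\<exists>\<alpha>\<in>x. \<exists>\<beta>\<in>z. \<alpha> + w + \<beta> \<in> y \<and> \<alpha> + w \<in> b \<and> w + \<beta> \<in> a"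
  then obtain \<alpha> \<beta> where h: "\<alpha>\<in>x" "\<beta>\<in>z" "\<alpha> + w + \<beta> \<in> y" "\<alpha> + w \<in> b" "w + \<beta> \<in> a" by blast
  show "\<exists>\<alpha>\<in>a. \<exists>\<beta>\<in>b. \<beta> + - w + \<alpha> \<in> y \<and> - w + \<alpha> \<in> z \<and> \<beta> + - w \<in> x"
    by (rule bexI[of _ "w + \<beta>"], rule bexI[of _ "\<alpha> + w"]) (use h in \<open>simp_all add: add.assoc flip: add_uminus_conv_diff\<close>)
next
  fix w :: 'a
  assume "\<exists>\<alpha>\<in>a. \<exists>\<beta>\<in>b. \<beta> + - w + \<alpha> \<in> y \<and> - w + \<alpha> \<in> z \<and> \<beta> + - w \<in> x"
  then obtain \<alpha> \<beta> where h: "\<alpha>\<in>a" "\<beta>\<in>b" "\<beta> + - w + \<alpha> \<in> y" "- w + \<alpha> \<in> z" "\<beta> + - w \<in> x" by blast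
  show "\<exists>\<alpha>\<in>x. \<exists>\<beta>\<in>z. \<alpha> + w + \<beta> \<in> y \<and> \<alpha> + w \<in> b \<and> w + \<beta> \<in> a"
    by (rule bexI[of _ "\<beta> + - w"], rule bexI[of _ "- w + \<alpha>"]) (use h in \<open>simp_all add: add.assoc flip: add_uminus_conv_diff\<close>)
qed

lemma sym_mem: "symmetric_set u \<Longrightarrow> (- v \<in> u) = ((v::'a::group_add) \<in> u)"
  unfolding symmetric_set_def by (metis mem_neg)

lemma p4:
  assumes "symmetric_set x" "symmetric_set a" "symmetric_set y" "symmetric_set b" "symmetric_set z"
  shows "Gam_check x a y b z = neg_set (Gam x a y b z)"
proof (rule set_eqI, unfold mem_neg Gam_def Gam_check_def mem_Collect_eq, rule iffI)
  fix w :: 'a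
  assume "\<exists>\<alpha>\<in>a. \<exists>\<beta>\<in>b. \<beta> + w + \<alpha> \<in> y \<and> w + \<alpha> \<in> z \<and> \<beta> + w \<in> x"
  then obtain \<alpha> \<beta> where h: "\<alpha>\<in>a" "\<beta>\<in>b" "\<beta> + w + \<alpha> \<in> y" "w + \<alpha> \<in> z" "\<beta> + w \<in> x" by blast
  have e1: "- \<alpha> + - w + - \<beta> = - (\<beta> + w + \<alpha>)" by (simp add: minus_add add.assoc)
  have e2: "- \<alpha> + - w = - (w + \<alpha>)" by (simp add: minus_add)
  have e3: "- w + - \<beta> = - (\<beta> + w)" by (simp add: minus_add)
  show "\<exists>\<alpha>\<in>a. \<exists>\<beta>\<in>b. \<alpha> + - w + \<beta> \<in> y \<and> \<alpha> + - w \<in> z \<and> - w + \<beta> \<in> x"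
    by (rule bexI[of _ "- \<alpha>"], rule bexI[of _ "- \<beta>"])
       (use h assms in \<open>metis e1 e2 e3 sym_mem\<close>)+
next
  fix w :: 'a
  assume "\<exists>\<alpha>\<in>a. \<exists>\<beta>\<in>b. \<alpha> + - w + \<beta> \<in> y \<and> \<alpha> + - w \<in> z \<and> - w + \<beta> \<in> x"
  then obtain \<alpha> \<beta> where h: "\<alpha>\<in>a" "\<beta>\<in>b" "\<alpha> + - w + \<beta> \<in> y" "\<alpha> + - w \<in> z" "- w + \<beta> \<in> x" by blast
  have e1: "- \<beta> + w + - \<alpha> = - (\<alpha> + - w + \<beta>)" by (simp add: minus_add add.assoc flip: add_uminus_conv_diff)
  have e2: "w + - \<alpha> = - (\<alpha> + - w)" by (simp add: minus_add)
  have e3: "- \<beta> + w = - (- w + \<beta>)" by (simp add: minus_add)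
  show "\<exists>\<alpha>\<in>a. \<exists>\<beta>\<in>b. \<beta> + w + \<alpha> \<in> y \<and> w + \<alpha> \<in> z \<and> \<beta> + w \<in> x"
    by (rule bexI[of _ "- \<alpha>"], rule bexI[of _ "- \<beta>"])
       (use h assms in \<open>metis e1 e2 e3 sym_mem\<close>)+
qed

lemma negneg: "neg_set (neg_set (S::'a::group_add set)) = S"
  by (auto simp: mem_neg)

lemma l1: "((Z::'a::group_add) = A + X + B \<and> E = A + X \<and> W = X + B) = (E = A + W - B \<and> Z = A + W \<and> X = W - B)"
  by (auto simp: add.assoc diff_add_eq[symmetric] simp flip: add_uminus_conv_diff)
lemma l2: "((E::'a::group_add) = A + Z + B \<and> W = A + Z \<and> X = Z + B) = (X = - A + W + B \<and> Z = - A + W \<and> E = W + B)"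
  by (auto simp: add.assoc simp flip: add_uminus_conv_diff)
lemma l3: "((W::'a::group_add) = A + E + B \<and> X = A + E \<and> Z = E + B) = (E = - A + W - B \<and> Z = - A + W \<and> X = W - B)"
  by (auto simp: add.assoc simp flip: add_uminus_conv_diff)

lemma k0: "(GammaS_perm id :: (letter \<Rightarrow> 'a::group_add) set) = GammaS_signed (\<lambda>v. 1)"
  by (simp add: GammaS_perm_def GammaS_signed_def apply_sign_def[abs_def])

lemma k1: "(GammaS_perm (sw2 Xi Omega Zeta Eta) :: (letter \<Rightarrow> 'a::group_add) set)
   = GammaS_signed (\<lambda>v. if v = Beta then -1 else 1)"
  apply (rule set_eqI, simp add: GammaS_perm_def GammaS_signed_def GammaS_def apply_sign_def sw2_def)
  by (rule l1)

lemma k2: "(GammaS_perm (sw2 Xi Eta Zeta Omega) :: (letter \<Rightarrow> 'a::group_add) set)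
   = GammaS_signed (\<lambda>v. if v = Alpha then -1 else 1)"
  apply (rule set_eqI, simp add: GammaS_perm_def GammaS_signed_def GammaS_def apply_sign_def sw2_def)
  by (rule l2)

lemma k3: "(GammaS_perm (sw2 Xi Zeta Eta Omega) :: (letter \<Rightarrow> 'a::group_add) set)
   = GammaS_signed (\<lambda>v. if v = Alpha \<or> v = Beta then -1 else 1)"
  apply (rule set_eqI, simp add: GammaS_perm_def GammaS_signed_def GammaS_def apply_sign_def sw2_def)
  by (rule l3)

theorem theorem9p8:
  fixes x a y b z :: "'a::group_add set"
  shows "Gam b z y x a = neg_set (Gam x a y b z)
       \<and> Gam z b y a x = Gam_check x a y b z
       \<and> Gam a x y z b = neg_set (Gam_check x a y b z)
       \<and> ((symmetric_set x \<and> symmetric_set a \<and> symmetric_set y \<and> symmetric_set b \<and> symmetric_set z)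
            \<longrightarrow> Gam x a y b z = Gam a x y z b)
       \<and> (\<forall>\<sigma>\<in>klein. \<exists>s. sign_vec s \<and> s Xi = 1 \<and> s Zeta = 1 \<and> s Eta = 1 \<and> s Omega = 1
            \<and> (GammaS_perm \<sigma> :: (letter \<Rightarrow> 'a) set) = GammaS_signed s)"
proof (intro conjI impI ballI)
  show "Gam b z y x a = neg_set (Gam x a y b z)" by (rule p1)
  show "Gam z b y a x = Gam_check x a y b z" by (rule p2)
  show "Gam a x y z b = neg_set (Gam_check x a y b z)" by (rule p3)
next
  assume "symmetric_set x \<and> symmetric_set a \<and> symmetric_set y \<and> symmetric_set b \<and> symmetric_set z"
  then show "Gam x a y b z = Gam a x y z b" using p3[of a x y z b] p4[of x a y b z] by (simp only: negneg)
next
  fix \<sigma> :: "letter \<Rightarrow> letter" assume "\<sigma> \<in> klein"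
  then show "\<exists>s. sign_vec s \<and> s Xi = 1 \<and> s Zeta = 1 \<and> s Eta = 1 \<and> s Omega = 1
            \<and> (GammaS_perm \<sigma> :: (letter \<Rightarrow> 'a) set) = GammaS_signed s"
    unfolding klein_def
  proof (elim insertE emptyE)
    assume "\<sigma> = id" then show ?thesis using k0 by (intro exI[of _ "\<lambda>v. 1"]) (auto simp: sign_vec_def)
  next
    assume "\<sigma> = sw2 Xi Omega Zeta Eta" then show ?thesis using k1 by (intro exI[of _ "\<lambda>v. if v = Beta then -1 else 1"]) (auto simp: sign_vec_def)
  next
    assume "\<sigma> = sw2 Xi Eta Zeta Omega" then show ?thesis using k2 by (intro exI[of _ "\<lambda>v. if v = Alpha then -1 else 1"]) (auto simp: sign_vec_def)
  next
    assume "\<sigma> = sw2 Xi Zeta Eta Omega" then show ?thesis using k3 by (intro exI[of _ "\<lambda>v. if v = Alpha \<or> v = Beta then -1 else 1"]) (auto simp: sign_vec_def)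
  qed
qed

end
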